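(* Let $\alpha>2$, $\ell>\alpha$ an integer, $L>\ell$ an integer, and let $b^e$ and the constants $c_1,\dots,c_\ell$ be as defined in the context (set $c_i=0$ for $i>\ell$). Let $b=(b_1,\dots,b_L)$ be a solution on an interval of $s>0$ of $b_{i,s}=-(i-\alpha)b_1b_i+b_{i+1}$ ($1\le i\le L-1$), $b_{L,s}=-(L-\alpha)b_1b_L$, and write $b_k(s)=b^e_k(s)+U_k(s)/s^k$, $U=(U_1,\dots,U_L)$, $U_{L+1}:=0$. Then for $1\le k\le L$, $$U_{k,s}=\frac1s\Big[\frac{\alpha(\ell-k)}{\ell-\alpha}U_k-(k-\alpha)c_kU_1+U_{k+1}\Big]-\frac{(k-\alpha)U_1U_k}{s},$$ i.e. $U_s=\frac1sA_\ell U+O(|U|^2/s)$ where $A_\ell$ is the $L\times L$ matrix with entries $(A_\ell)_{k,k}=\frac{\alpha(\ell-k)}{\ell-\alpha}$ for $k\ge2$, $(A_\ell)_{1,1}=\frac{\alpha(\ell-1)}{\ell-\alpha}-(1-\alpha)c_1$, $(A_\ell)_{k,1}=-(k-\alpha)c_k$ for $2\le k\le\ell$, $(A_\ell)_{k,k+1}=1$ for $1\le k\le L-1$, and all other entries $0$. Moreover: $(A_\ell)_{k,j}=0$ whenever $k>\ell\ge j$; the upper-left $\ell\times\ell$ block $A'_\ell$ of $A_\ell$ has characteristic polynomial $\det(A'_\ell-X\,\mathrm{Id})=(X+1)\prod_{i=2}^{\ell}\big(\frac{i\alpha}{\ell-\alpha}-X\big)$, hence is diagonalizable with the distinct eigenvalues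 $-1,\frac{2\alpha}{\ell-\alpha},\dots,\frac{\ell\alpha}{\ell-\alpha}$; and the lower-right $(L-\ell)\times(L-\ell)$ block is upper triangular with diagonal entries $-\frac{(k-\ell)\alpha}{\ell-\alpha}$, $\ell+1\le k\le L$. Consequently the eigenvalues of $A_\ell$ are $-1,\frac{2\alpha}{\ell-\alpha},\dots,\frac{\ell\alpha}{\ell-\alpha}$ and $-\frac{\alpha}{\ell-\alpha},\dots,-\frac{(L-\ell)\alpha}{\ell-\alpha}$, and the eigenvectors for $-1,\frac{2\alpha}{\ell-\alpha},\dots,\frac{\ell\alpha}{\ell-\alpha}$ only involve the first $\ell$ coordinates.
   Context: $c_1=\frac{\ell}{\ell-\alpha}$, $c_{i+1}=-\frac{\alpha(\ell-i)}{\ell-\alpha}c_i$ for $1\le i\le\ell-1$; $b^e_i(s)=c_i/s^i$ for $1\le i\le\ell$ and $b^e_i\equiv0$ for $\ell<i\le L$ (this $b^e$ solves the same system). Subscript $s$ denotes $d/ds$. *)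

theory Defs
  imports "HOL-Analysis.Analysis" "Jordan_Normal_Form.Jordan_Normal_Form"
begin

fun cc :: "real \<Rightarrow> nat \<Rightarrow> nat \<Rightarrow> real" where
  "cc a l 0 = 0"
| "cc a l (Suc i) =
     (if i = 0 then real l / (real l - a)
      else if Suc i \<le> l then - (a * (real l - real i) / (real l - a)) * cc a l i
      else 0)"

definition be :: "real \<Rightarrow> nat \<Rightarrow> nat \<Rightarrow> real \<Rightarrow> real" where
  "be a l i s = (if 1 \<le> i \<and> i \<le> l then cc a l i / s ^ i else 0)"

text \<open>Entries of the matrix A_l, in the paper's 1-based indexing (k = row, j = column).\<close>
definition A_entry :: "real \<Rightarrow> nat \<Rightarrow> nat \<Rightarrow> nat \<Rightarrow> real" where
  "A_entry a l k j =
     (if k = 1 \<and> j = 1 then a * (real l - 1) / (real l - a) - (1 - a) * cc a l 1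
      else if k = j then a * (real l - real k) / (real l - a)
      else if j = 1 \<and> 2 \<le> k \<and> k \<le> l then - (real k - a) * cc a l k
      else if j = k + 1 then 1
      else 0)"

text \<open>The L x L matrix A_l (Jordan_Normal_Form matrices are 0-indexed:
  entry (k-1, j-1) is the paper's (A_l)_{k,j}).\<close>
definition A_mat :: "real \<Rightarrow> nat \<Rightarrow> nat \<Rightarrow> real mat" where
  "A_mat a l L = mat L L (\<lambda>(i, j). A_entry a l (i + 1) (j + 1))"

definition UL_block :: "real mat \<Rightarrow> nat \<Rightarrow> real mat" where
  "UL_block A l = mat l l (\<lambda>(i, j). A $$ (i, j))"

definition LR_block :: "real mat \<Rightarrow> nat \<Rightarrow> nat \<Rightarrow> real mat" where
  "LR_block A l L = mat (L - l) (L - l) (\<lambda>(i, j). A $$ (i + l, j + l))"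

definition diagonalizable_mat :: "real mat \<Rightarrow> bool" where
  "diagonalizable_mat A = (\<exists>D. diagonal_mat D \<and> similar_mat A D)"

end

theory Submission
  imports Defs "Jordan_Normal_Form.Jordan_Normal_Form_Existence"
begin


definition GE :: "(nat\<Rightarrow>real) \<Rightarrow> (nat\<Rightarrow>real) \<Rightarrow> nat \<Rightarrow> nat \<Rightarrow> real" where
  "GE d f i j = (if i = j then d i else 0) + (if j = 0 then f i else 0) + (if j = Suc i then 1 else 0)"

definition KM :: "(nat\<Rightarrow>real) \<Rightarrow> (nat\<Rightarrow>real) \<Rightarrow> real \<Rightarrow> nat \<Rightarrow> real mat" where
  "KM d f x n = mat n n (\<lambda>(i,j). (if i = j then x else 0) - GE d f i j)"

fun rr :: "(nat\<Rightarrow>real) \<Rightarrow> (nat\<Rightarrow>real) \<Rightarrow> nat \<Rightarrow> real \<Rightarrow> real" where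
  "rr d f 0 x = 1"
| "rr d f (Suc n) x = (x - d n) * rr d f n x - f n"

lemma KM_carrier[simp]: "KM d f x n \<in> carrier_mat n n"
  unfolding KM_def by auto

lemma det_delete0: "det (mat_delete (KM d f x (Suc n)) n 0) = (-1)^n"
proof -
  let ?D = "mat_delete (KM d f x (Suc n)) n 0"
  have D: "?D \<in> carrier_mat n n" using mat_delete_carrier[OF KM_carrier[of d f x "Suc n"]] by simp
  have ent: "?D $$ (i,j) = (if i = Suc j then x - d i else 0) - (if j = i then 1 else 0)"
    if "i < n" "j < n" for i j
    using that unfolding mat_delete_def KM_def GE_def by auto
  have "det ?D = prod_list (diag_mat ?D)"
    by (rule det_lower_triangular[OF _ D]) (simp add: ent)
  also have "diag_mat ?D = replicate n (-1)"
    using D by (auto simp: diag_mat_def ent intro!: nth_equalityI)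
  finally show ?thesis by simp
qed

lemma det_KM: "det (KM d f x n) = rr d f n x"
proof (induction n)
  case 0
  then show ?case by (simp add: KM_def)
next
  case (Suc n)
  let ?K = "KM d f x (Suc n)"
  have dn: "mat_delete ?K n n = KM d f x n"
    by (rule eq_matI) (auto simp: mat_delete_def KM_def GE_def)
  have "det ?K = (\<Sum>j<Suc n. ?K $$ (n,j) * cofactor ?K n j)"
    by (rule laplace_expansion_row[OF KM_carrier]) simp
  also have "\<dots> = (\<Sum>j<Suc n. (if j = n then (x - d n) * cofactor ?K n j else 0)
                   - (if j = 0 then f n * cofactor ?K n j else 0))"
    by (rule sum.cong) (auto simp: KM_def GE_def algebra_simps)
  also have "\<dots> = (x - d n) * cofactor ?K n n - f n * cofactor ?K n 0"
    by (simp add: sum_subtractf)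
  also have "cofactor ?K n n = rr d f n x"
    unfolding cofactor_def dn Suc by simp
  also have "cofactor ?K n 0 = 1"
    unfolding cofactor_def det_delete0 by (simp flip: power_add)
  finally show ?case by simp
qed

lemma char_poly_GM:
  assumes "A = mat n n (\<lambda>(i,j). GE d f i j)"
  shows "poly (char_poly A) x = rr d f n x"
proof -
  have A: "A \<in> carrier_mat n n" using assms by auto
  have "- char_matrix A x = KM d f x n"
    by (rule eq_matI) (auto simp: assms char_matrix_def KM_def)
  then show ?thesis using char_poly_matrix[OF A] det_KM by simp
qed

lemma GM_row:
  assumes A: "A = mat n n (\<lambda>(i,j). GE d f i j)" and v: "v \<in> carrier_vec n" and i: "Suc i < n"
  shows "(A *\<^sub>v v) $ i = d i * v $ i + f i * v $ 0 + v $ Suc i"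
proof -
  have "(A *\<^sub>v v) $ i = (\<Sum>j = 0..<n. GE d f i j * v $ j)"
    using A v i by (auto simp: scalar_prod_def)
  also have "\<dots> = (\<Sum>j = 0..<n. (if j = i then d i * v $ j else 0) + (if j = 0 then f i * v $ j else 0)
       + (if j = Suc i then v $ j else 0))"
    by (rule sum.cong) (auto simp: GE_def algebra_simps)
  also have "\<dots> = d i * v $ i + f i * v $ 0 + v $ Suc i"
    using i by (simp add: sum.distrib)
  finally show ?thesis .
qed

lemma eigvec_rec:
  assumes A: "A = mat n n (\<lambda>(i,j). GE d f i j)" and ev: "eigenvector A v mu"
  shows "i < n \<Longrightarrow> v $ i = rr d f i mu * v $ 0"
proof (induction i)
  case 0
  then show ?case by simp
next
  case (Suc i)
  have v: "v \<in> carrier_vec n" and eq: "A *\<^sub>v v = mu \<cdot>\<^sub>v v"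
    using ev A unfolding eigenvector_def by auto
  have "(A *\<^sub>v v) $ i = mu * v $ i" using eq v Suc.prems by simp
  then have "v $ Suc i = (mu - d i) * v $ i - f i * v $ 0"
    using GM_row[OF A v Suc.prems] by (simp add: algebra_simps)
  then show ?case using Suc by (simp add: algebra_simps)
qed

lemma rr_tail:
  assumes "\<And>i. m \<le> i \<Longrightarrow> f i = 0"
  shows "rr d f (m + j) x = rr d f m x * (\<Prod>i\<in>{m..<m+j}. x - d i)"
  by (induction j) (auto simp: assms)

lemma rr_closed:
  "rr d f n x = (\<Prod>i<n. x - d i) - (\<Sum>k<n. f k * (\<Prod>i\<in>{Suc k..<n}. x - d i))"
proof (induction n)
  case 0
  then show ?case by simp
next
  case (Suc n)
  define S where "S = (\<Sum>k<n. f k * (\<Prod>i\<in>{Suc k..<n}. x - d i))"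
  define P where "P = (\<Prod>i<n. x - d i)"
  have h: "(\<Sum>k<Suc n. f k * (\<Prod>i\<in>{Suc k..<Suc n}. x - d i)) = S * (x - d n) + f n"
    unfolding S_def by (simp add: sum_distrib_right prod.atLeastLessThan_Suc mult.assoc)
  have p: "(\<Prod>i<Suc n. x - d i) = P * (x - d n)" unfolding P_def by simp
  have "rr d f (Suc n) x = (x - d n) * (P - S) - f n"
    using Suc.IH unfolding S_def P_def by simp
  then show ?case unfolding h p by (simp add: algebra_simps)
qed

definition dd :: "real \<Rightarrow> nat \<Rightarrow> nat \<Rightarrow> real" where
  "dd a l i = a * (real l - real (Suc i)) / (real l - a)"
definition ff :: "real \<Rightarrow> nat \<Rightarrow> nat \<Rightarrow> real" where
  "ff a l i = - (real (Suc i) - a) * cc a l (Suc i)"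

lemma cc_zero: "l < k \<Longrightarrow> cc a l k = 0"
  by (cases k) auto

lemma ff_zero: "l \<le> i \<Longrightarrow> ff a l i = 0"
  by (simp add: ff_def cc_zero)

lemma cc_step: "1 \<le> i \<Longrightarrow> Suc i \<le> l \<Longrightarrow> cc a l (Suc i) = - (a * (real l - real i) / (real l - a)) * cc a l i"
  by (cases i) auto

lemma alg2:
  fixes a L m C1 C2 C3 b :: real
  assumes c2: "C2 = - (b * (L - (m+1))) * C1"
    and c3: "C3 = - (b * (L - (m+2))) * C2"
  shows "- ((m+3) - a) * C3 + 2 * (L - m - 2) * b * (- ((m+2) - a) * C2)
     + (L - m - 1) * (L - m - 2) * b^2 * (- ((m+1) - a) * C1) = 0"
  unfolding c3 c2 by (simp add: power2_eq_square algebra_simps)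

lemma three_term:
  assumes "m + 3 \<le> l" and al: "a < real l"
  shows "ff a l (m+2) + 2 * (real l - real m - 2) * (a / (real l - a)) * ff a l (m+1)
     + (real l - real m - 1) * (real l - real m - 2) * (a / (real l - a))^2 * ff a l m = 0"
proof -
  have c2: "cc a l (Suc (Suc m)) = - ((a / (real l - a)) * (real l - (real m + 1))) * cc a l (Suc m)"
    using assms cc_step[of "Suc m" l a] by (auto simp del: cc.simps)
  have c3: "cc a l (Suc (Suc (Suc m))) = - ((a / (real l - a)) * (real l - (real m + 2))) * cc a l (Suc (Suc m))"
    using assms cc_step[of "Suc (Suc m)" l a] by (auto simp del: cc.simps)
  have e: "ff a l (m+2) = - ((real m + 3) - a) * cc a l (Suc (Suc (Suc m)))"
       "ff a l (m+1) = - ((real m + 2) - a) * cc a l (Suc (Suc m))"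
       "ff a l m = - ((real m + 1) - a) * cc a l (Suc m)"
    unfolding ff_def by (simp_all add: algebra_simps del: cc.simps)
  show ?thesis unfolding e by (rule alg2[OF c2 c3])
qed

lemma alg1:
  fixes F0 F1 F2 L' \<beta> x :: real
  assumes "F2 + 2*(L'-2)*\<beta>*F1 + (L'-1)*(L'-2)*\<beta>^2*F0 = 0"
  shows "F0*((x-\<beta>)*x) + (F1*x + F2 + (L'-3)*\<beta>*F1) = (x - (L'-1)*\<beta>)*(F0*x+F1+(L'-2)*\<beta>*F0)"
  using assms by (simp add: power2_eq_square algebra_simps)

lemma dd_near:
  assumes "2 \<le> l"
  shows "dd a l (l-2) = a / (real l - a)" "dd a l (l-1) = 0" "dd a l (l - Suc 0) = 0"
  using assms by (auto simp: dd_def of_nat_diff)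

lemma back_sum:
  assumes l2: "2 \<le> l" and m: "m \<le> l - 2" and al: "a < real l"
  shows "(\<Sum>k\<in>{m..<l}. ff a l k * (\<Prod>i\<in>{Suc k..<l}. x - dd a l i))
     = (\<Prod>i\<in>{m..<l-2}. x - dd a l i) * (ff a l m * x + ff a l (m+1) + (real l - real m - 2) * (a / (real l - a)) * ff a l m)"
  using m
proof (induction m rule: inc_induct)
  case base
  have e: "{l-2..<l} = {l-2, l-1}" using l2 by auto
  have e2: "{Suc (l-2)..<l} = {l-1}" "{Suc (l-1)..<l} = {}" using l2 by auto
  have e3: "Suc (l-2) = l - 1" "l - 2 + 1 = l - 1" using l2 by auto
  have h1: "(\<Prod>i\<in>{Suc (l-2)..<l}. x - dd a l i) = x" unfolding e2 using l2 by (simp add: dd_near)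
  have h2: "(\<Prod>i\<in>{Suc (l-1)..<l}. x - dd a l i) = 1" unfolding e2 by simp
  have ne: "l - 2 \<noteq> l - 1" using l2 by auto
  have "(\<Sum>k\<in>{l-2..<l}. ff a l k * (\<Prod>i\<in>{Suc k..<l}. x - dd a l i)) = ff a l (l-2) * x + ff a l (l-1)"
    unfolding e using ne h1 h2 by simp
  then show ?case using l2 by (simp add: e3 of_nat_diff)
next
  case (step n)
  define \<beta> where "\<beta> = a / (real l - a)"
  define P where "P = (\<Prod>i\<in>{Suc n..<l-2}. x - dd a l i)"
  have s: "(\<Sum>k\<in>{n..<l}. ff a l k * (\<Prod>i\<in>{Suc k..<l}. x - dd a l i))
     = ff a l n * (\<Prod>i\<in>{Suc n..<l}. x - dd a l i) + (\<Sum>k\<in>{Suc n..<l}. ff a l k * (\<Prod>i\<in>{Suc k..<l}. x - dd a l i))"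
    using step by (intro sum.atLeast_Suc_lessThan) auto
  have p1: "(\<Prod>i\<in>{Suc n..<l}. x - dd a l i) = P * ((x - \<beta>) * x)"
  proof -
    have se: "{Suc n..<l} = {Suc n..<l-2} \<union> {l-2, l-1}" using step l2 by auto
    have "(\<Prod>i\<in>{Suc n..<l}. x - dd a l i) = P * (\<Prod>i\<in>{l-2, l-1}. x - dd a l i)"
      unfolding se P_def by (rule prod.union_disjoint) auto
    also have "(\<Prod>i\<in>{l-2, l-1}. x - dd a l i) = (x - dd a l (l-2)) * (x - dd a l (l-1))"
      using l2 by simp
    finally show ?thesis unfolding \<beta>_def using l2 by (simp add: dd_near)
  qed
  have p2: "(\<Prod>i\<in>{n..<l-2}. x - dd a l i) = (x - dd a l n) * P"
    unfolding P_def using step by (intro prod.atLeast_Suc_lessThan) auto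
  have dn: "dd a l n = (real l - real n - 1) * \<beta>"
    unfolding dd_def \<beta>_def by (simp add: field_simps)
  have tt: "ff a l (n+2) + 2 * ((real l - real n) - 2) * \<beta> * ff a l (n+1)
     + ((real l - real n) - 1) * ((real l - real n) - 2) * \<beta>^2 * ff a l n = 0"
    using three_term[of n l a] step al unfolding \<beta>_def by (simp add: algebra_simps)
  have IH: "(\<Sum>k\<in>{Suc n..<l}. ff a l k * (\<Prod>i\<in>{Suc k..<l}. x - dd a l i))
     = P * (ff a l (n+1) * x + ff a l (n+2) + ((real l - real n) - 3) * \<beta> * ff a l (n+1))"
    using step.IH unfolding P_def \<beta>_def by (simp add: algebra_simps)
  note key = arg_cong[OF alg1[OF tt, of x], of "\<lambda>t. P * t"]
  show ?case unfolding s p1 p2 IH \<beta>_def[symmetric] dn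
    using key by (simp add: algebra_simps)
qed

lemma rr_l:
  assumes a2: "2 < a" and al: "a < real l"
  shows "rr (dd a l) (ff a l) l x = (x + 1) * (\<Prod>i\<in>{2..l}. x - real i * a / (real l - a))"
proof -
  have l3: "3 \<le> l" using a2 al by linarith
  define \<beta> where "\<beta> = a / (real l - a)"
  define Q where "Q = (\<Prod>i\<in>{0..<l-2}. x - dd a l i)"
  have r: "rr (dd a l) (ff a l) l x = (\<Prod>i<l. x - dd a l i)
     - (\<Sum>k\<in>{0..<l}. ff a l k * (\<Prod>i\<in>{Suc k..<l}. x - dd a l i))"
    by (simp add: rr_closed atLeast0LessThan)
  have b: "(\<Sum>k\<in>{0..<l}. ff a l k * (\<Prod>i\<in>{Suc k..<l}. x - dd a l i))
     = Q * (ff a l 0 * x + ff a l 1 + (real l - 2) * \<beta> * ff a l 0)"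
    using back_sum[of l 0 a x] l3 al unfolding Q_def \<beta>_def by simp
  have p: "(\<Prod>i<l. x - dd a l i) = Q * ((x - \<beta>) * x)"
  proof -
    have se: "{..<l} = {0..<l-2} \<union> {l-2, l-1}" using l3 by auto
    have "(\<Prod>i<l. x - dd a l i) = Q * (\<Prod>i\<in>{l-2, l-1}. x - dd a l i)"
      unfolding se Q_def by (rule prod.union_disjoint) auto
    also have "(\<Prod>i\<in>{l-2, l-1}. x - dd a l i) = (x - dd a l (l-2)) * (x - dd a l (l-1))"
      using l3 by simp
    finally show ?thesis unfolding \<beta>_def using l3 by (simp add: dd_near)
  qed
  have q: "Q = (\<Prod>i\<in>{2..<l}. x - real i * a / (real l - a))"
    unfolding Q_def
  proof (rule prod.reindex_bij_witness[where i = "\<lambda>b. l - 1 - b" and j = "\<lambda>b. l - 1 - b"])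
    fix b assume "b \<in> {0..<l-2}"
    then show "x - real (l - 1 - b) * a / (real l - a) = x - dd a l b"
      unfolding dd_def by (simp add: of_nat_diff)
  qed auto
  have t: "(\<Prod>i\<in>{2..l}. x - real i * a / (real l - a)) = Q * (x - real l * a / (real l - a))"
  proof -
    have "{2..l} = {2..<Suc l}" by auto
    then show ?thesis unfolding q using l3 by (simp add: prod.atLeastLessThan_Suc)
  qed
  have c1: "cc a l 1 = real l / (real l - a)" by simp
  have c2: "cc a l 2 = - (a * (real l - 1) / (real l - a)) * cc a l 1"
    using cc_step[of 1 l a] l3 by (simp add: numeral_2_eq_2 del: cc.simps)
  have f0: "ff a l 0 = - (1 - a) * (real l / (real l - a))" unfolding ff_def by simp
  have f1: "ff a l 1 = - (2 - a) * (- (a * (real l - 1) / (real l - a)) * (real l / (real l - a)))"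
    unfolding ff_def using c2 c1 by (simp add: numeral_2_eq_2 del: cc.simps)
  have ne: "real l - a \<noteq> 0" using al by simp
  define u where "u = a / (real l - a)"
  define v where "v = real l / (real l - a)"
  have uv1: "v - u - 1 = 0" unfolding u_def v_def diff_divide_distrib[symmetric] using ne by simp
  have uv2: "real l * u - a * v = 0" unfolding u_def v_def by simp
  have vv: "v * (a - real l) = - real l" unfolding v_def using ne by (simp add: field_simps)
  have uv3: "u * (v * (a - real l)) + real l * u = 0" unfolding vv by simp
  have f0': "ff a l 0 = - (1 - a) * v" unfolding f0 v_def ..
  have f1': "ff a l 1 = - (2 - a) * (- (u * (real l - 1)) * v)" unfolding f1 u_def v_def by simp
  have lu: "real l * a / (real l - a) = real l * u" unfolding u_def by simp
  have "(x - u) * x - (ff a l 0 * x + ff a l 1 + (real l - 2) * u * ff a l 0) - (x + 1) * (x - real l * u)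
      = x * ((v - u - 1) + (real l * u - a * v)) + (u * (v * (a - real l)) + real l * u)"
    unfolding f0' f1' by (simp add: algebra_simps)
  then have s: "(x - \<beta>) * x - (ff a l 0 * x + ff a l 1 + (real l - 2) * \<beta> * ff a l 0)
      = (x + 1) * (x - real l * a / (real l - a))"
    unfolding uv1 uv2 uv3 lu \<beta>_def u_def[symmetric] by simp
  show ?thesis unfolding r b p t
    using arg_cong[OF s, of "\<lambda>t. Q * t"] by (simp add: algebra_simps)
qed



lemma order_lin_prod:
  fixes as :: "real list"
  shows "distinct as \<Longrightarrow> order c (prod_list (map (\<lambda>x. [:-x,1:]) as)) \<le> 1"
proof (induction as)
  case Nil
  then show ?case by simp
next
  case (Cons x as)
  let ?P = "prod_list (map (\<lambda>x. [:-x,1:]) as)"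
  have nz: "?P \<noteq> 0" by (auto simp: prod_list_zero_iff)
  have nz2: "[:-x,1:] * ?P \<noteq> 0" using nz by (simp only: mult_eq_0_iff) simp
  have o: "order c ([:-x,1:] * ?P) = order c [:-x,1:] + order c ?P"
    by (rule order_mult[OF nz2])
  show ?case
  proof (cases "c = x")
    case True
    have "poly ?P c \<noteq> 0" using Cons.prems True by (force simp: poly_prod_list prod_list_zero_iff)
    then have "order c ?P = 0" by (rule order_0I)
    moreover have "order c [:-x,1:] = 1" using order_power_n_n[of c 1] True by simp
    ultimately show ?thesis using o by simp
  next
    case False
    have "order c [:-x,1:] = 0" using False by (intro order_0I) simp
    then show ?thesis using o Cons by simp
  qed
qed

lemma diag_jordan: "(\<And>n a. (n,a) \<in> set n_as \<Longrightarrow> n = 1) \<Longrightarrow> diagonal_mat (jordan_matrix (n_as :: (nat \<times> real) list))"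
proof (induction n_as)
  case Nil
  then show ?case by (simp add: jordan_matrix_def diagonal_mat_def)
next
  case (Cons na n_as)
  obtain n a where na: "na = (n,a)" by fastforce
  have n1: "n = 1" using Cons.prems na by auto
  have D: "diagonal_mat (jordan_matrix n_as)" using Cons by auto
  show ?case unfolding na jordan_matrix_Cons n1 using D
    unfolding diagonal_mat_def by (auto simp: jordan_block_def)
qed

lemma diag_of_distinct:
  fixes A :: "real mat"
  assumes A: "A \<in> carrier_mat n n" and cp: "char_poly A = prod_list (map (\<lambda>x. [:-x,1:]) as)"
    and d: "distinct as"
  shows "diagonalizable_mat A"
proof -
  obtain n_as where j: "jordan_nf A n_as" using jordan_nf_exists[OF A cp] by blast
  have "\<And>n a. (n,a) \<in> set n_as \<Longrightarrow> n = 1"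
  proof -
    fix n a assume m: "(n,a) \<in> set n_as"
    have "n \<le> order a (char_poly A)" by (rule jordan_nf_block_size_order_bound[OF j m])
    also have "\<dots> \<le> 1" unfolding cp using d by (rule order_lin_prod)
    finally have "n \<le> 1" .
    moreover have "n \<noteq> 0" using j m unfolding jordan_nf_def by force
    ultimately show "n = 1" by simp
  qed
  then have "diagonal_mat (jordan_matrix n_as)" by (rule diag_jordan)
  then show ?thesis using j unfolding jordan_nf_def diagonalizable_mat_def by blast
qed



lemma A_mat_GE:
  assumes "1 \<le> l"
  shows "A_mat a l L = mat L L (\<lambda>(i,j). GE (dd a l) (ff a l) i j)"
proof (rule eq_matI)
  fix i j assume "i < dim_row (mat L L (\<lambda>(i,j). GE (dd a l) (ff a l) i j))"
    "j < dim_col (mat L L (\<lambda>(i,j). GE (dd a l) (ff a l) i j))"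
  then have ij: "i < L" "j < L" by auto
  show "A_mat a l L $$ (i, j) = mat L L (\<lambda>(i,j). GE (dd a l) (ff a l) i j) $$ (i, j)"
    using ij assms unfolding A_mat_def A_entry_def GE_def dd_def ff_def
    by (auto simp: cc_zero algebra_simps simp del: cc.simps)
qed (auto simp: A_mat_def)

context
  fixes a :: real and l L :: nat
  assumes a2: "2 < a" and al: "a < real l" and lL: "l < L"
begin

lemma l3: "3 \<le> l" using a2 al by linarith

lemma ne: "real l - a \<noteq> 0" using al by simp

lemma UL_GE: "UL_block (A_mat a l L) l = mat l l (\<lambda>(i,j). GE (dd a l) (ff a l) i j)"
proof -
  have l1: "1 \<le> l" using l3 by simp
  show ?thesis unfolding UL_block_def A_mat_GE[OF l1]
    by (rule eq_matI) (use lL in auto)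
qed

lemma UL_carrier: "UL_block (A_mat a l L) l \<in> carrier_mat l l"
  unfolding UL_block_def by simp

lemma poly_UL: "poly (char_poly (UL_block (A_mat a l L) l)) x = (x + 1) * (\<Prod>i\<in>{2..l}. x - real i * a / (real l - a))"
  using char_poly_GM[OF UL_GE] rr_l[OF a2 al] by simp

lemma cp_UL: "char_poly (UL_block (A_mat a l L) l) = [:1, 1:] * (\<Prod>i = 2..l. [: - (real i * a / (real l - a)), 1 :])"
proof -
  have "poly (char_poly (UL_block (A_mat a l L) l)) = poly ([:1, 1:] * (\<Prod>i = 2..l. [: - (real i * a / (real l - a)), 1 :]))"
  proof
    fix x show "poly (char_poly (UL_block (A_mat a l L) l)) x = poly ([:1, 1:] * (\<Prod>i = 2..l. [: - (real i * a / (real l - a)), 1 :])) x"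
      unfolding poly_UL by (simp add: poly_prod algebra_simps)
  qed
  then show ?thesis by (simp add: poly_eq_poly_eq_iff)
qed

lemma eig_UL: "{mu. eigenvalue (UL_block (A_mat a l L) l) mu}
        = insert (-1) ((\<lambda>i. real i * a / (real l - a)) ` {2..l})"
proof -
  have "eigenvalue (UL_block (A_mat a l L) l) mu \<longleftrightarrow> mu \<in> insert (-1) ((\<lambda>i. real i * a / (real l - a)) ` {2..l})" for mu
    unfolding eigenvalue_root_char_poly[OF UL_carrier] poly_UL mult_eq_0_iff
    by (auto simp: prod_zero_iff eq_neg_iff_add_eq_0)
  then show ?thesis by blast
qed

lemma card_eig: "card (insert (-1) ((\<lambda>i. real i * a / (real l - a)) ` {2..l})) = l"
proof -
  have pos: "real l - a > 0" using al by simp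
  have inj: "inj_on (\<lambda>i. real i * a / (real l - a)) {2..l}"
    using pos a2 by (intro inj_onI) (auto simp: field_simps)
  have nin: "-1 \<notin> (\<lambda>i. real i * a / (real l - a)) ` {2..l}"
  proof
    assume "-1 \<in> (\<lambda>i. real i * a / (real l - a)) ` {2..l}"
    then obtain i where "real i * a / (real l - a) = -1" by (metis (no_types, lifting) imageE)
    moreover have "real i * a / (real l - a) \<ge> 0" using pos a2 by simp
    ultimately show False by simp
  qed
  show ?thesis using nin card_image[OF inj] l3 by simp
qed

lemma cp_UL_list: "char_poly (UL_block (A_mat a l L) l) = prod_list (map (\<lambda>x. [:-x,1:]) ((-1) # map (\<lambda>i. real i * a / (real l - a)) [2..<Suc l]))"
proof -
  have "(\<Prod>i = 2..l. [: - (real i * a / (real l - a)), 1 :]) = prod_list (map (\<lambda>i. [: - (real i * a / (real l - a)), 1 :]) [2..<Suc l])"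
    by (subst prod.distinct_set_conv_list[symmetric]) (auto intro: prod.cong)
  then show ?thesis unfolding cp_UL by (simp add: o_def)
qed

lemma diag_UL: "diagonalizable_mat (UL_block (A_mat a l L) l)"
proof (rule diag_of_distinct[OF UL_carrier cp_UL_list])
  have "card (set ((-1) # map (\<lambda>i. real i * a / (real l - a)) [2..<Suc l])) = l"
  proof -
    have "set [2..<Suc l] = {2..l}" by auto
    then show ?thesis using card_eig by (simp only: list.set set_map)
  qed
  moreover have "length ((-1) # map (\<lambda>i. real i * a / (real l - a)) [2..<Suc l]) = l" using l3 by simp
  ultimately show "distinct ((-1) # map (\<lambda>i. real i * a / (real l - a)) [2..<Suc l])"
    by (metis card_distinct)
qed

lemma l1: "1 \<le> l" using l3 by simp

lemma A_carrier: "A_mat a l L \<in> carrier_mat L L" unfolding A_mat_def by simp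

lemma A_entry_GE: "i < L \<Longrightarrow> j < L \<Longrightarrow> A_mat a l L $$ (i,j) = GE (dd a l) (ff a l) i j"
  unfolding A_mat_GE[OF l1] by simp

lemma dd_tail: "l \<le> i \<Longrightarrow> dd a l i = - (real (Suc i - l) * a / (real l - a))"
  using ne unfolding dd_def by (simp add: of_nat_diff field_simps)

lemma rr_L: "rr (dd a l) (ff a l) L x = rr (dd a l) (ff a l) l x * (\<Prod>i\<in>{l..<L}. x - dd a l i)"
  using rr_tail[of l "ff a l" "dd a l" "L - l" x] ff_zero[of l] lL by simp

lemma poly_A: "poly (char_poly (A_mat a l L)) x = rr (dd a l) (ff a l) L x"
  by (rule char_poly_GM[OF A_mat_GE[OF l1]])

lemma eig_A: "{mu. eigenvalue (A_mat a l L) mu}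
        = insert (-1) ((\<lambda>i. real i * a / (real l - a)) ` {2..l})
          \<union> (\<lambda>j. - (real j * a / (real l - a))) ` {1..L - l}"
proof -
  have img: "(\<lambda>j. - (real j * a / (real l - a))) ` {1..L - l} = dd a l ` {l..<L}"
  proof
    show "(\<lambda>j. - (real j * a / (real l - a))) ` {1..L - l} \<subseteq> dd a l ` {l..<L}"
    proof
      fix y assume "y \<in> (\<lambda>j. - (real j * a / (real l - a))) ` {1..L - l}"
      then obtain j where j: "j \<in> {1..L - l}" "y = - (real j * a / (real l - a))" by blast
      have "l + j - 1 \<in> {l..<L}" "Suc (l + j - 1) - l = j" using j by auto
      then show "y \<in> dd a l ` {l..<L}" using j dd_tail[of "l + j - 1"]
        by (metis (no_types, lifting) atLeastLessThan_iff image_eqI)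
    qed
    show "dd a l ` {l..<L} \<subseteq> (\<lambda>j. - (real j * a / (real l - a))) ` {1..L - l}"
    proof
      fix y assume "y \<in> dd a l ` {l..<L}"
      then obtain i where i: "i \<in> {l..<L}" "y = dd a l i" by blast
      have "Suc i - l \<in> {1..L - l}" using i by auto
      then show "y \<in> (\<lambda>j. - (real j * a / (real l - a))) ` {1..L - l}"
        by (rule rev_image_eqI) (simp only: i(2) dd_tail[of i] i(1)[unfolded atLeastLessThan_iff, THEN conjunct1])
    qed
  qed
  have "eigenvalue (A_mat a l L) mu \<longleftrightarrow> mu \<in> insert (-1) ((\<lambda>i. real i * a / (real l - a)) ` {2..l})
          \<union> dd a l ` {l..<L}" for mu
    unfolding eigenvalue_root_char_poly[OF A_carrier] poly_A rr_L rr_l[OF a2 al] mult_eq_0_iff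
    by (auto simp: prod_zero_iff eq_neg_iff_add_eq_0)
  then show ?thesis unfolding img by blast
qed

lemma zero_block: "l < k \<Longrightarrow> k \<le> L \<Longrightarrow> 1 \<le> j \<Longrightarrow> j \<le> l \<Longrightarrow> A_mat a l L $$ (k - 1, j - 1) = 0"
  using lL by (subst A_entry_GE) (auto simp: GE_def ff_zero)

lemma LR_ut: "upper_triangular (LR_block (A_mat a l L) l L)"
  unfolding upper_triangular_def LR_block_def
  using l3 by (auto simp: A_entry_GE GE_def)

lemma LR_diag: "l + 1 \<le> k \<Longrightarrow> k \<le> L \<Longrightarrow>
          LR_block (A_mat a l L) l L $$ (k - l - 1, k - l - 1)
            = - ((real k - real l) * a / (real l - a))"
  unfolding LR_block_def using l3
  by (auto simp: A_entry_GE GE_def dd_tail of_nat_diff ff_zero)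

lemma eigvec_A:
  fixes v :: "real Matrix.vec"
  assumes mu: "mu \<in> insert (-1) ((\<lambda>i. real i * a / (real l - a)) ` {2..l})"
    and ev: "eigenvector (A_mat a l L) v mu" and k: "l \<le> k" "k < L"
  shows "v $ k = 0"
proof -
  have r0: "rr (dd a l) (ff a l) l mu = 0"
    unfolding rr_l[OF a2 al] using mu by (auto simp: prod_zero_iff)
  have "rr (dd a l) (ff a l) k mu = 0"
    using rr_tail[of l "ff a l" "dd a l" "k - l" mu] ff_zero[of l] k r0 by simp
  then show ?thesis using eigvec_rec[OF A_mat_GE[OF l1] ev k(2)] by simp
qed

end



lemma cc_rel:
  assumes al: "a < real l" and k: "1 \<le> k"
  shows "cc a l (Suc k) = ((real k - a) * cc a l 1 - real k) * cc a l k"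
proof -
  have ne: "real l - a \<noteq> 0" using al by simp
  consider "Suc k \<le> l" | "k = l" | "l < k" by linarith
  then show ?thesis
  proof cases
    case 1
    have "cc a l (Suc k) = - (a * (real l - real k) / (real l - a)) * cc a l k"
      using cc_step[OF k 1] .
    moreover have "- (a * (real l - real k) / (real l - a)) = ((real k - a) * cc a l 1 - real k)"
      using ne by (simp add: field_simps)
    ultimately show ?thesis by simp
  next
    case 2
    have "(real k - a) * cc a l 1 - real k = 0" using ne 2 by simp
    then show ?thesis using cc_zero[of l "Suc k" a] 2 by simp
  next
    case 3
    then show ?thesis using cc_zero[of l k a] cc_zero[of l "Suc k" a] by simp
  qed
qed

lemma alg_ode:
  fixes s P b1 bk B c1 ck ck1 km e a :: real
  assumes s: "s \<noteq> 0" and he: "e = km - (km - a) * c1" and h1: "ck1 = ((km - a) * c1 - km) * ck"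
  shows "km * (P / s) * bk + (- (km - a) * b1 * bk + B) * P
     = (1 / s) * (e * (P * bk - ck) - (km - a) * ck * (s * b1 - c1) + (s * P * B - ck1))
       - (km - a) * (s * b1 - c1) * (P * bk - ck) / s"
  using s unfolding he h1 by (simp add: field_simps)

lemma be_eq: "1 \<le> k \<Longrightarrow> be a l k s = cc a l k / s ^ k"
  unfolding be_def using cc_zero[of l k a] by auto

lemma ode_part:
  fixes a :: real and l L :: nat and I :: "real set"
    and b U :: "nat \<Rightarrow> real \<Rightarrow> real"
  assumes al: "real l > a"
    and LL: "L > l"
    and I_pos: "I \<subseteq> {0<..}"
    and ode: "\<And>i s. 1 \<le> i \<Longrightarrow> i \<le> L - 1 \<Longrightarrow> s \<in> I \<Longrightarrow>
               (b i has_real_derivative (- (real i - a) * b 1 s * b i s + b (i + 1) s)) (at s within I)"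
    and odeL: "\<And>s. s \<in> I \<Longrightarrow>
               (b L has_real_derivative (- (real L - a) * b 1 s * b L s)) (at s within I)"
    and U_def: "\<And>k s. U k s = (if 1 \<le> k \<and> k \<le> L then s ^ k * (b k s - be a l k s) else 0)"
    and k: "1 \<le> k" "k \<le> L" and sI: "s \<in> I"
  shows "(U k has_real_derivative
               (1 / s) * (a * (real l - real k) / (real l - a) * U k s
                          - (real k - a) * cc a l k * U 1 s + U (k + 1) s)
               - (real k - a) * U 1 s * U k s / s) (at s within I)"
proof -
  have spos: "s > 0" using sI I_pos by auto
  have ne: "real l - a \<noteq> 0" using al by simp
  define B where "B = (if k < L then b (k+1) s else 0)"
  have db: "(b k has_real_derivative (- (real k - a) * b 1 s * b k s + B)) (at s within I)"
  proof (cases "k < L")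
    case True
    then show ?thesis unfolding B_def using ode[OF k(1) _ sI] by simp
  next
    case False
    then have "k = L" using k by simp
    then show ?thesis unfolding B_def using odeL[OF sI] by simp
  qed
  have Uk: "U k x = x ^ k * b k x - cc a l k" if "x \<in> I" for x
  proof -
    have "x > 0" using that I_pos by auto
    then show ?thesis unfolding U_def using k by (simp add: be_eq right_diff_distrib)
  qed
  have d1: "((\<lambda>t. t ^ k * b k t - cc a l k) has_real_derivative
      (real k * s ^ (k - 1) * b k s + (- (real k - a) * b 1 s * b k s + B) * s ^ k)) (at s within I)"
    by (rule derivative_eq_intros db refl | simp)+
  have d2: "(U k has_real_derivative
      (real k * s ^ (k - 1) * b k s + (- (real k - a) * b 1 s * b k s + B) * s ^ k)) (at s within I)"
    by (rule has_field_derivative_transform_within[OF d1 spos sI]) (simp add: Uk)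
  have U1: "U 1 s = s * b 1 s - cc a l 1" using Uk[OF sI] U_def k sI spos by (simp add: be_eq right_diff_distrib)
  have Ukk: "U k s = s ^ k * b k s - cc a l k" using Uk[OF sI] .
  have Uk1: "U (k+1) s = s * s ^ k * B - cc a l (Suc k)"
  proof (cases "k < L")
    case True
    then show ?thesis unfolding U_def B_def using spos by (simp add: be_eq right_diff_distrib)
  next
    case False
    then have "l < Suc k" using k LL by simp
    then show ?thesis unfolding U_def B_def using False cc_zero[of l "Suc k" a] by simp
  qed
  have sk: "s ^ (k - 1) = s ^ k / s" using spos k by (simp add: power_diff)
  have he: "a * (real l - real k) / (real l - a) = real k - (real k - a) * cc a l 1"
    using ne by (simp add: field_simps)
  have eq: "real k * s ^ (k - 1) * b k s + (- (real k - a) * b 1 s * b k s + B) * s ^ k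
     = (1 / s) * (a * (real l - real k) / (real l - a) * U k s
                          - (real k - a) * cc a l k * U 1 s + U (k + 1) s)
               - (real k - a) * U 1 s * U k s / s"
    unfolding U1 Ukk Uk1 sk
    by (rule alg_ode[OF _ he cc_rel[OF al k(1)]]) (use spos in simp)
  show ?thesis using d2 unfolding eq .
qed


theorem mainTheorem8:
  fixes a :: real and l L :: nat and I :: "real set"
    and b U :: "nat \<Rightarrow> real \<Rightarrow> real"
  assumes alpha: "a > 2"
    and ell: "real l > a"
    and LL: "L > l"
    and I_int: "is_interval I" and I_pos: "I \<subseteq> {0<..}"
    and ode: "\<And>i s. 1 \<le> i \<Longrightarrow> i \<le> L - 1 \<Longrightarrow> s \<in> I \<Longrightarrow>
               (b i has_real_derivative (- (real i - a) * b 1 s * b i s + b (i + 1) s)) (at s within I)"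
    and odeL: "\<And>s. s \<in> I \<Longrightarrow>
               (b L has_real_derivative (- (real L - a) * b 1 s * b L s)) (at s within I)"
    and U_def: "\<And>k s. U k s = (if 1 \<le> k \<and> k \<le> L then s ^ k * (b k s - be a l k s) else 0)"
  shows "(\<forall>k s. 1 \<le> k \<and> k \<le> L \<and> s \<in> I \<longrightarrow>
            (U k has_real_derivative
               (1 / s) * (a * (real l - real k) / (real l - a) * U k s
                          - (real k - a) * cc a l k * U 1 s + U (k + 1) s)
               - (real k - a) * U 1 s * U k s / s) (at s within I))
    \<and> (\<forall>k j. l < k \<and> k \<le> L \<and> 1 \<le> j \<and> j \<le> l \<longrightarrow> A_mat a l L $$ (k - 1, j - 1) = 0)
    \<and> char_poly (UL_block (A_mat a l L) l)
        = [:1, 1:] * (\<Prod>i = 2..l. [: - (real i * a / (real l - a)), 1 :])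
    \<and> diagonalizable_mat (UL_block (A_mat a l L) l)
    \<and> {mu. eigenvalue (UL_block (A_mat a l L) l) mu}
        = insert (-1) ((\<lambda>i. real i * a / (real l - a)) ` {2..l})
    \<and> card {mu. eigenvalue (UL_block (A_mat a l L) l) mu} = l
    \<and> upper_triangular (LR_block (A_mat a l L) l L)
    \<and> (\<forall>k. l + 1 \<le> k \<and> k \<le> L \<longrightarrow>
          LR_block (A_mat a l L) l L $$ (k - l - 1, k - l - 1)
            = - ((real k - real l) * a / (real l - a)))
    \<and> {mu. eigenvalue (A_mat a l L) mu}
        = insert (-1) ((\<lambda>i. real i * a / (real l - a)) ` {2..l})
          \<union> (\<lambda>j. - (real j * a / (real l - a))) ` {1..L - l}
    \<and> (\<forall>mu \<in> insert (-1) ((\<lambda>i. real i * a / (real l - a)) ` {2..l}).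
         \<forall>v. eigenvector (A_mat a l L) v mu \<longrightarrow> (\<forall>k. l \<le> k \<and> k < L \<longrightarrow> v $ k = 0))"
proof -
  have A: "\<forall>k s. 1 \<le> k \<and> k \<le> L \<and> s \<in> I \<longrightarrow>
            (U k has_real_derivative
               (1 / s) * (a * (real l - real k) / (real l - a) * U k s
                          - (real k - a) * cc a l k * U 1 s + U (k + 1) s)
               - (real k - a) * U 1 s * U k s / s) (at s within I)"
    using ode_part[OF ell LL I_pos ode odeL U_def] by blast
  show ?thesis
    using A zero_block[OF alpha ell LL] cp_UL[OF alpha ell LL] diag_UL[OF alpha ell LL]
      eig_UL[OF alpha ell LL] card_eig[OF alpha ell LL] LR_ut[OF alpha ell LL] LR_diag[OF alpha ell LL]
      eig_A[OF alpha ell LL] eigvec_A[OF alpha ell LL]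
    by (auto simp del: cc.simps)
qed

end
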